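(* Let $\sigma$ be an optimal solution of a Bin Packing instance, let $b_1,\dots,b_r$ be the bins of $\sigma$ that contain small items and exactly one large item, in an arbitrary order, and let $L$ be the collection of the large items in these bins. Process $j=1,\dots,r$ and place into $b_j$ (which keeps its small items) the largest item of $L$ not yet placed into $b_1,\dots,b_{j-1}$ whose size plus the total size of the small items of $b_j$ is at most $T$. Then in each step such an item exists, and the resulting packing (all other bins unchanged) is a feasible, and hence optimal, solution.
   Context: Bin Packing: given a sequence of items with sizes in $\mathbb{Q}_{\ge 0}$ and a capacity $T$, a solution assigns the items to bins so that the total size in each bin is at most $T$; an optimal solution uses the minimum number of bins. A subsequence of items is 3-incompatible if no three distinct items of it have total size at most $T$; the large items form a largest 3-incompatible subsequence and the remaining items are small. *)

theory Defs
  imports Complex_Main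
begin

text \<open>Items are the indices 0..<length s of the size list s; a solution is an
assignment f of items to bin labels; its bins are the labels actually used.\<close>

definition items :: "rat list \<Rightarrow> nat set" where
  "items s = {..<length s}"

definition bin_items :: "rat list \<Rightarrow> (nat \<Rightarrow> nat) \<Rightarrow> nat \<Rightarrow> nat set" where
  "bin_items s f b = {i \<in> items s. f i = b}"

definition feasible :: "rat list \<Rightarrow> rat \<Rightarrow> (nat \<Rightarrow> nat) \<Rightarrow> bool" where
  "feasible s T f \<longleftrightarrow> (\<forall>b. (\<Sum>i\<in>bin_items s f b. s ! i) \<le> T)"

definition num_bins :: "rat list \<Rightarrow> (nat \<Rightarrow> nat) \<Rightarrow> nat" where
  "num_bins s f = card (f ` items s)"

definition optimal :: "rat list \<Rightarrow> rat \<Rightarrow> (nat \<Rightarrow> nat) \<Rightarrow> bool" where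
  "optimal s T f \<longleftrightarrow> feasible s T f \<and> (\<forall>g. feasible s T g \<longrightarrow> num_bins s f \<le> num_bins s g)"

definition incompatible3 :: "rat list \<Rightarrow> rat \<Rightarrow> nat set \<Rightarrow> bool" where
  "incompatible3 s T A \<longleftrightarrow> A \<subseteq> items s \<and>
     (\<forall>i\<in>A. \<forall>j\<in>A. \<forall>k\<in>A. i \<noteq> j \<and> i \<noteq> k \<and> j \<noteq> k \<longrightarrow> s ! i + s ! j + s ! k > T)"

definition large_items :: "rat list \<Rightarrow> rat \<Rightarrow> nat set \<Rightarrow> bool" where
  "large_items s T A \<longleftrightarrow> incompatible3 s T A \<and> (\<forall>B. incompatible3 s T B \<longrightarrow> card B \<le> card A)"

definition small_load :: "rat list \<Rightarrow> nat set \<Rightarrow> (nat \<Rightarrow> nat) \<Rightarrow> nat \<Rightarrow> rat" where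
  "small_load s A f b = (\<Sum>i\<in>bin_items s f b - A. s ! i)"

definition mixed_bins :: "rat list \<Rightarrow> nat set \<Rightarrow> (nat \<Rightarrow> nat) \<Rightarrow> nat set" where
  "mixed_bins s A f = {b. bin_items s f b - A \<noteq> {} \<and> card (bin_items s f b \<inter> A) = 1}"

text \<open>Step j of the greedy process (bins in order bs, large items Lg, choices p):
  p j is a largest not-yet-placed item of Lg that fits with the small items of bs!j.\<close>
definition greedy_step ::
  "rat list \<Rightarrow> rat \<Rightarrow> nat set \<Rightarrow> (nat \<Rightarrow> nat) \<Rightarrow> nat list \<Rightarrow> nat set \<Rightarrow> (nat \<Rightarrow> nat) \<Rightarrow> nat \<Rightarrow> bool" where
  "greedy_step s T A f bs Lg p j \<longleftrightarrow>
     p j \<in> Lg - p ` {..<j} \<and> s ! (p j) + small_load s A f (bs ! j) \<le> T \<and>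
     (\<forall>i\<in>Lg - p ` {..<j}. s ! i + small_load s A f (bs ! j) \<le> T \<longrightarrow> s ! i \<le> s ! (p j))"

definition repack :: "nat list \<Rightarrow> (nat \<Rightarrow> nat) \<Rightarrow> (nat \<Rightarrow> nat) \<Rightarrow> nat \<Rightarrow> nat" where
  "repack bs f p i = (if i \<in> p ` {..<length bs} then bs ! (THE k. k < length bs \<and> p k = i) else f i)"

end

theory Submission
  imports Defs
begin

lemma greedy_inv:
  fixes sz w :: "nat \<Rightarrow> rat"
  assumes m0: "inj_on m0 {..<n}" "m0 ` {..<n} = Lg" "\<forall>k<n. sz (m0 k) + w k \<le> T"
  shows "j \<le> n \<Longrightarrow> (\<forall>k<j. p k \<in> Lg - p ` {..<k} \<and> sz (p k) + w k \<le> T \<and>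
            (\<forall>i\<in>Lg - p ` {..<k}. sz i + w k \<le> T \<longrightarrow> sz i \<le> sz (p k))) \<Longrightarrow>
     \<exists>m. inj_on m {j..<n} \<and> m ` {j..<n} = Lg - p ` {..<j} \<and> (\<forall>k\<in>{j..<n}. sz (m k) + w k \<le> T)"
proof (induction j)
  case 0
  then show ?case using m0 by (auto simp: atLeast0LessThan)
next
  case (Suc j)
  then obtain m where inj: "inj_on m {j..<n}" and img: "m ` {j..<n} = Lg - p ` {..<j}"
    and fit: "\<forall>k\<in>{j..<n}. sz (m k) + w k \<le> T" by auto
  have jn: "j < n" using Suc by auto
  have pj: "p j \<in> Lg - p ` {..<j}" "\<forall>i\<in>Lg - p ` {..<j}. sz i + w j \<le> T \<longrightarrow> sz i \<le> sz (p j)"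
    using Suc(3) by auto
  obtain k where k: "k \<in> {j..<n}" "m k = p j" using pj(1) img by (metis imageE)
  have "m j \<in> m ` {j..<n}" using jn by auto
  then have mj: "m j \<in> Lg - p ` {..<j}" using img by simp
  have le: "sz (m j) \<le> sz (p j)" using pj(2) mj fit jn by auto
  define m' where "m' = m(k := m j)"
  have "inj_on m' {Suc j..<n}"
  proof (rule inj_onI)
    fix a b assume a: "a \<in> {Suc j..<n}" and b: "b \<in> {Suc j..<n}" and e: "m' a = m' b"
    have ja: "a \<noteq> j" "b \<noteq> j" using a b by auto
    have aa: "a \<in> {j..<n}" "b \<in> {j..<n}" "j \<in> {j..<n}" using a b jn by auto
    show "a = b"
    proof (cases "a = k")
      case True
      show ?thesis
      proof (rule ccontr)
        assume "a \<noteq> b"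
        then have "m j = m b" using e True m'_def by auto
        then show False using inj aa ja unfolding inj_on_def by metis
      qed
    next
      case False
      show ?thesis
      proof (cases "b = k")
        case True
        then have "m a = m j" using e False m'_def by auto
        then show ?thesis using inj aa ja unfolding inj_on_def by metis
      next
        case F2: False
        then have "m a = m b" using e False m'_def by auto
        then show ?thesis using inj aa unfolding inj_on_def by metis
      qed
    qed
  qed
  moreover have "m' ` {Suc j..<n} = Lg - p ` {..<Suc j}"
  proof -
    have "m' ` {Suc j..<n} = m ` {j..<n} - {m k}"
    proof
      show "m' ` {Suc j..<n} \<subseteq> m ` {j..<n} - {m k}"
      proof
        fix x assume "x \<in> m' ` {Suc j..<n}"
        then obtain i where i: "i \<in> {Suc j..<n}" "x = m' i" by auto
        show "x \<in> m ` {j..<n} - {m k}"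
        proof (cases "i = k")
          case True
          then have "x = m j" using i m'_def by auto
          moreover have "m j \<noteq> m k"
          proof
            assume "m j = m k"
            moreover have "j \<in> {j..<n}" "k \<in> {j..<n}" using jn k by auto
            ultimately have "j = k" using inj unfolding inj_on_def by blast
            then show False using True i by auto
          qed
          ultimately show ?thesis using jn by auto
        next
          case False
          then have "x = m i" using i m'_def by auto
          moreover have "m i \<noteq> m k" using inj k False i unfolding inj_on_def by auto
          ultimately show ?thesis using i by auto
        qed
      qed
    next
      show "m ` {j..<n} - {m k} \<subseteq> m' ` {Suc j..<n}"
      proof
        fix x assume "x \<in> m ` {j..<n} - {m k}"
        then obtain i where i: "i \<in> {j..<n}" "x = m i" "i \<noteq> k" by (metis DiffE imageE singletonI)
        show "x \<in> m' ` {Suc j..<n}"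
        proof (cases "i = j")
          case True
          then have "k \<noteq> j" "m' k = x" using i m'_def by auto
          then show ?thesis using k by force
        next
          case False
          then have "m' i = x" using i m'_def by auto
          moreover have "i \<in> {Suc j..<n}" using i False by auto
          ultimately show ?thesis by (metis imageI)
        qed
      qed
    qed
    also have "\<dots> = Lg - p ` {..<Suc j}" using img k by (auto simp: lessThan_Suc)
    finally show ?thesis .
  qed
  moreover have "\<forall>i\<in>{Suc j..<n}. sz (m' i) + w i \<le> T"
  proof
    fix i assume i: "i \<in> {Suc j..<n}"
    show "sz (m' i) + w i \<le> T"
    proof (cases "i = k")
      case True
      then have "sz (m' i) \<le> sz (m k)" using m'_def le k by auto
      then show ?thesis using fit k True by force
    next
      case False
      then show ?thesis using fit i m'_def by auto
    qed
  qed
  ultimately show ?case by blast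
qed


theorem claim11:
  fixes s :: "rat list" and T :: rat and \<sigma> :: "nat \<Rightarrow> nat" and A :: "nat set"
    and bs :: "nat list" and Lg :: "nat set"
  assumes nonneg: "\<forall>x\<in>set s. 0 \<le> x"
    and opt: "optimal s T \<sigma>"
    and large: "large_items s T A"
    and bs_dist: "distinct bs"
    and bs_set: "set bs = mixed_bins s A \<sigma>"
    and Lg_def: "Lg = (\<Union>b\<in>set bs. bin_items s \<sigma> b \<inter> A)"
  shows "(\<forall>j<length bs. \<forall>p. (\<forall>k<j. greedy_step s T A \<sigma> bs Lg p k) \<longrightarrow>
            (\<exists>i\<in>Lg - p ` {..<j}. s ! i + small_load s A \<sigma> (bs ! j) \<le> T))
       \<and> (\<forall>p. (\<forall>k<length bs. greedy_step s T A \<sigma> bs Lg p k) \<longrightarrow>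
            feasible s T (repack bs \<sigma> p) \<and> optimal s T (repack bs \<sigma> p))"
proof -
  define n where "n = length bs"
  define w where "w = (\<lambda>k. small_load s A \<sigma> (bs ! k))"
  define sz where "sz = (\<lambda>i. s ! i)"
  have feas: "feasible s T \<sigma>" using opt unfolding optimal_def by auto
  have fin: "finite (bin_items s \<sigma> b)" for b unfolding bin_items_def items_def by auto
  have "\<forall>k. \<exists>x. k < n \<longrightarrow> bin_items s \<sigma> (bs ! k) \<inter> A = {x}"
  proof (intro allI)
    fix k
    show "\<exists>x. k < n \<longrightarrow> bin_items s \<sigma> (bs ! k) \<inter> A = {x}"
    proof (cases "k < n")
      case True
      then have "bs ! k \<in> mixed_bins s A \<sigma>" using bs_set n_def nth_mem by metis
      then have "card (bin_items s \<sigma> (bs ! k) \<inter> A) = 1" unfolding mixed_bins_def by auto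
      then show ?thesis by (metis card_1_singletonE)
    qed auto
  qed
  then obtain l where l: "\<And>k. k < n \<Longrightarrow> bin_items s \<sigma> (bs ! k) \<inter> A = {l k}" by metis
  have lin: "l k \<in> items s" "\<sigma> (l k) = bs ! k" "l k \<in> A" if "k < n" for k
    using l[OF that] unfolding bin_items_def by auto
  have linj: "inj_on l {..<n}"
  proof (rule inj_onI)
    fix a b assume "a \<in> {..<n}" "b \<in> {..<n}" "l a = l b"
    then have "bs ! a = bs ! b" "a < n" "b < n" using lin by (auto, metis)
    then show "a = b" using bs_dist n_def nth_eq_iff_index_eq by metis
  qed
  have limg: "l ` {..<n} = Lg"
  proof -
    have "Lg = (\<Union>k\<in>{..<n}. bin_items s \<sigma> (bs ! k) \<inter> A)"
      unfolding Lg_def n_def by (auto simp: in_set_conv_nth, metis nth_mem)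
    also have "\<dots> = (\<Union>k\<in>{..<n}. {l k})" using l by auto
    finally show ?thesis by auto
  qed
  have lfit: "\<forall>k<n. sz (l k) + w k \<le> T"
  proof (intro allI impI)
    fix k assume k: "k < n"
    have eq: "bin_items s \<sigma> (bs ! k) = (bin_items s \<sigma> (bs ! k) - A) \<union> {l k}"
      using l[OF k] by auto
    have "(\<Sum>i\<in>bin_items s \<sigma> (bs ! k). s ! i) = (\<Sum>i\<in>bin_items s \<sigma> (bs ! k) - A. s ! i) + s ! l k"
      using lin[OF k] fin by (subst eq, subst sum.union_disjoint, auto)
    then show "sz (l k) + w k \<le> T" using feas unfolding feasible_def sz_def w_def small_load_def
      by (metis add.commute)
  qed
  have inv: "\<And>j p. j \<le> n \<Longrightarrow> (\<forall>k<j. greedy_step s T A \<sigma> bs Lg p k) \<Longrightarrow>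
     \<exists>m. inj_on m {j..<n} \<and> m ` {j..<n} = Lg - p ` {..<j} \<and> (\<forall>k\<in>{j..<n}. sz (m k) + w k \<le> T)"
    apply (rule greedy_inv[OF linj limg lfit])
    by (auto simp: greedy_step_def sz_def w_def)
  have part1: "\<forall>j<length bs. \<forall>p. (\<forall>k<j. greedy_step s T A \<sigma> bs Lg p k) \<longrightarrow>
            (\<exists>i\<in>Lg - p ` {..<j}. s ! i + small_load s A \<sigma> (bs ! j) \<le> T)"
  proof (intro allI impI)
    fix j p assume j: "j < length bs" and g: "\<forall>k<j. greedy_step s T A \<sigma> bs Lg p k"
    obtain m where m: "m ` {j..<n} = Lg - p ` {..<j}" "\<forall>k\<in>{j..<n}. sz (m k) + w k \<le> T"
      using inv[of j p] j g n_def by auto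
    have "m j \<in> m ` {j..<n}" using j n_def by auto
    then have "m j \<in> Lg - p ` {..<j}" using m(1) by simp
    moreover have "sz (m j) + w j \<le> T" using m(2) j n_def by auto
    ultimately show "\<exists>i\<in>Lg - p ` {..<j}. s ! i + small_load s A \<sigma> (bs ! j) \<le> T"
      unfolding sz_def w_def by auto
  qed
  have part2: "feasible s T (repack bs \<sigma> p) \<and> optimal s T (repack bs \<sigma> p)"
    if g: "\<forall>k<length bs. greedy_step s T A \<sigma> bs Lg p k" for p
  proof -
    have gs: "p k \<in> Lg - p ` {..<k}" "s ! p k + w k \<le> T" if "k < n" for k
      using g that n_def unfolding greedy_step_def w_def by auto
    obtain m where "m ` {n..<n} = Lg - p ` {..<n}" using inv[of n p] g n_def by auto
    then have "Lg \<subseteq> p ` {..<n}" by auto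
    moreover have "p ` {..<n} \<subseteq> Lg" using gs by auto
    ultimately have pimg: "p ` {..<n} = Lg" by auto
    have pinj: "inj_on p {..<n}"
    proof (rule inj_onI)
      fix a b assume a: "a \<in> {..<n}" and b: "b \<in> {..<n}" and e: "p a = p b"
      show "a = b"
      proof (rule ccontr)
        assume "a \<noteq> b"
        then consider "a < b" | "b < a" by linarith
        then show False
        proof cases
          case 1 then have "p a \<in> p ` {..<b}" by auto
          then show False using gs[of b] b e by auto
        next
          case 2 then have "p b \<in> p ` {..<a}" by auto
          then show False using gs[of a] a e by auto
        qed
      qed
    qed
    have LgA: "Lg \<subseteq> A" unfolding Lg_def by auto
    have Lgs: "\<sigma> i \<in> set bs" if "i \<in> Lg" for i using that unfolding Lg_def bin_items_def by auto
    have Lgi: "Lg \<subseteq> items s" unfolding Lg_def bin_items_def by auto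
    have rp: "repack bs \<sigma> p (p k) = bs ! k" if k: "k < n" for k
    proof -
      have "(THE k'. k' < length bs \<and> p k' = p k) = k"
        using k pinj n_def by (intro the_equality) (auto simp: inj_on_def)
      then show ?thesis unfolding repack_def using k n_def by auto
    qed
    have rno: "repack bs \<sigma> p i = \<sigma> i" if "i \<notin> Lg" for i
      using that pimg n_def unfolding repack_def by auto
    have binbs: "bin_items s (repack bs \<sigma> p) (bs ! k) = (bin_items s \<sigma> (bs ! k) - A) \<union> {p k}"
      if k: "k < n" for k
    proof
      show "bin_items s (repack bs \<sigma> p) (bs ! k) \<subseteq> (bin_items s \<sigma> (bs ! k) - A) \<union> {p k}"
      proof
        fix i assume i: "i \<in> bin_items s (repack bs \<sigma> p) (bs ! k)"
        show "i \<in> (bin_items s \<sigma> (bs ! k) - A) \<union> {p k}"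
        proof (cases "i \<in> Lg")
          case True
          then obtain k' where k': "k' < n" "i = p k'" using pimg by auto
          then have "bs ! k' = bs ! k" using rp i unfolding bin_items_def by auto
          then have "k' = k" using k k' bs_dist n_def nth_eq_iff_index_eq by metis
          then show ?thesis using k' by auto
        next
          case False
          then have "\<sigma> i = bs ! k" "i \<in> items s" using i rno unfolding bin_items_def by auto
          moreover have "i \<notin> A"
          proof
            assume "i \<in> A"
            then have "i \<in> Lg" unfolding Lg_def bin_items_def using calculation k n_def by auto
            then show False using False by auto
          qed
          ultimately show ?thesis unfolding bin_items_def by auto
        qed
      qed
    next
      show "(bin_items s \<sigma> (bs ! k) - A) \<union> {p k} \<subseteq> bin_items s (repack bs \<sigma> p) (bs ! k)"
        using rp[OF k] rno LgA gs(1)[OF k] Lgi unfolding bin_items_def by (auto, metis subsetD)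
    qed
    have binout: "bin_items s (repack bs \<sigma> p) b = bin_items s \<sigma> b" if b: "b \<notin> set bs" for b
    proof -
      have "repack bs \<sigma> p i = b \<longleftrightarrow> \<sigma> i = b" for i
      proof (cases "i \<in> Lg")
        case True
        then obtain k' where k': "k' < n" "i = p k'" using pimg by auto
        then show ?thesis using rp Lgs True b n_def by (metis nth_mem)
      qed (simp add: rno)
      then show ?thesis unfolding bin_items_def by auto
    qed
    have feasr: "feasible s T (repack bs \<sigma> p)"
      unfolding feasible_def
    proof
      fix b
      show "(\<Sum>i\<in>bin_items s (repack bs \<sigma> p) b. s ! i) \<le> T"
      proof (cases "b \<in> set bs")
        case True
        then obtain k where k: "k < n" "b = bs ! k" using n_def by (metis in_set_conv_nth)
        have "(\<Sum>i\<in>bin_items s (repack bs \<sigma> p) b. s ! i) = w k + s ! p k"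
          unfolding binbs[OF k(1)] k(2) w_def small_load_def
          using fin gs(1)[OF k(1)] LgA by (subst sum.union_disjoint, auto)
        then show ?thesis using gs(2)[OF k(1)] by auto
      next
        case False
        then show ?thesis using binout feas unfolding feasible_def by auto
      qed
    qed
    have "repack bs \<sigma> p ` items s \<subseteq> \<sigma> ` items s"
    proof
      fix x assume "x \<in> repack bs \<sigma> p ` items s"
      then obtain i where i: "i \<in> items s" "x = repack bs \<sigma> p i" by auto
      show "x \<in> \<sigma> ` items s"
      proof (cases "i \<in> Lg")
        case True
        then obtain k' where k': "k' < n" "i = p k'" using pimg by auto
        then have "x = \<sigma> (l k')" using rp lin i by auto
        then show ?thesis using lin k' by (metis imageI)
      qed (use i rno in auto)
    qed
    then have "num_bins s (repack bs \<sigma> p) \<le> num_bins s \<sigma>"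
      unfolding num_bins_def items_def by (intro card_mono) auto
    then show ?thesis using feasr opt unfolding optimal_def by auto
  qed
  show ?thesis using part1 part2 by blast
qed

end
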